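(* Consider searching on a line with turn cost $t$ and lower bound $\lambda>0$, and suppose $s:=\frac{t}{2\lambda}\ge1$. Then the periodic strategy with distances $$x_i=\Big((1+s)\big(1+s^{-1}\big)^i-s\Big)\lambda,\qquad i\ge1,$$ is optimal, and its competitive ratio is $$\frac{2x_1+t+\lambda}{\lambda}=\frac{2\,(s+2)\,(s+\tfrac12)}{s}.$$
   Context: Searching on a line with turn cost. Fix $\lambda>0$, $t\ge 0$. A search strategy is a sequence $\mathcal S(i)=(x_i,r_i)$, $i\ge1$, with $x_i>0$, $r_i\in\{\mathrm{left},\mathrm{right}\}$ and $\sup\{x_i:r_i=\mathrm{left}\}=\sup\{x_i:r_i=\mathrm{right}\}=\infty$. At step $i$ the searcher walks distance $x_i$ from the origin along ray $r_i$ and, if the target is not found, walks back to the origin, paying an additional turn cost $t$; thus each unsuccessful step costs $2x_i+t$. The target is on one of the two rays at unknown distance $D\ge\lambda$ and is found at the first step $j$ with $r_j$ equal to its ray and $x_j\ge D$; the total cost is then $\sum_{i=1}^{j-1}(2x_i+t)+D$. The competitive ratio of $\mathcal S$ is the supremum over all target positions of total cost divided by $D$; a strategy is optimal if its competitive ratio is minimal among all search strategies. A periodic strategy with distances $x_i$ means $r_1\ne r_2$ and $r_{i+2}=r_i$ (the rays alternate). For a periodic strategy with increasing distances the competitive ratio equals $\max\Big\{\frac{2x_1+t+\lambda}{\lambda},\ \sup_{n\ge1}\frac{\sum_{i=1}^{n+1}(2x_i+t)+x_n}{x_n}\Big\}$. *)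

theory Defs
  imports Complex_Main "HOL-Library.Extended_Real"
begin

text \<open>A search strategy is given by distances x i and rays r i for i \<ge> 1
  (r i = True means right, False means left); index 0 is ignored.\<close>

definition valid_strategy :: "(nat \<Rightarrow> real) \<Rightarrow> (nat \<Rightarrow> bool) \<Rightarrow> bool" where
  "valid_strategy x r \<longleftrightarrow>
     (\<forall>i\<ge>1. x i > 0) \<and>
     (\<forall>M. \<exists>i\<ge>1. \<not> r i \<and> x i > M) \<and>
     (\<forall>M. \<exists>i\<ge>1. r i \<and> x i > M)"

definition find_step :: "(nat \<Rightarrow> real) \<Rightarrow> (nat \<Rightarrow> bool) \<Rightarrow> bool \<Rightarrow> real \<Rightarrow> nat" where
  "find_step x r rho D = (LEAST j. j \<ge> 1 \<and> r j = rho \<and> D \<le> x j)"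

definition search_cost :: "real \<Rightarrow> (nat \<Rightarrow> real) \<Rightarrow> (nat \<Rightarrow> bool) \<Rightarrow> bool \<Rightarrow> real \<Rightarrow> real" where
  "search_cost t x r rho D = (\<Sum>i=1..<find_step x r rho D. 2 * x i + t) + D"

definition comp_ratio :: "real \<Rightarrow> real \<Rightarrow> (nat \<Rightarrow> real) \<Rightarrow> (nat \<Rightarrow> bool) \<Rightarrow> ereal" where
  "comp_ratio lam t x r =
     (SUP p \<in> {(rho, D). lam \<le> D}. ereal (search_cost t x r (fst p) (snd p) / snd p))"

definition optimal_strategy :: "real \<Rightarrow> real \<Rightarrow> (nat \<Rightarrow> real) \<Rightarrow> (nat \<Rightarrow> bool) \<Rightarrow> bool" where
  "optimal_strategy lam t x r \<longleftrightarrow> valid_strategy x r \<and>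
     (\<forall>x' r'. valid_strategy x' r' \<longrightarrow> comp_ratio lam t x r \<le> comp_ratio lam t x' r')"

definition periodic_rays :: "(nat \<Rightarrow> bool) \<Rightarrow> bool" where
  "periodic_rays r \<longleftrightarrow> r 1 \<noteq> r 2 \<and> (\<forall>i\<ge>1. r (i + 2) = r i)"

end

theory Submission
  imports Defs
begin


lemma core_lb:
  fixes a :: "nat \<Rightarrow> real" and c s q :: real
  assumes s1: "s \<ge> 1" and qdef: "q = 1 + 1/s" and c: "c > 0"
  and inc: "\<And>k. a k < a (Suc k)" and a0: "a 0 > 0"
  and a1: "a 1 \<le> q * a 0"
  and rec: "\<And>k. a (Suc (Suc k)) \<le> c/2 * (a (Suc k) - a k)"
  shows "c \<ge> 2*(1+s)^2/s"
proof (rule ccontr)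
  assume "\<not> ?thesis"
  hence cl: "c < 2*(1+s)^2/s" by simp
  define th where "th = c / (2*(1+s)^2/s)"
  have cs: "2*(1+s)^2/s > 0" using s1 by simp
  have th0: "0 < th" using c s1 by (simp add: th_def)
  have th1: "th < 1" unfolding th_def using cl cs by (metis divide_less_eq_1_pos)
  have pos: "\<And>k. a k > 0"
  proof -
    fix k show "a k > 0"
      by (induction k) (use a0 inc less_trans in blast)+
  qed
  have q1: "q \<ge> 1" using s1 qdef by simp
  have key: "c/2*(r-1) \<le> th*r^2" if r0: "0 < r" and rq: "r \<le> q" for r
  proof -
    have sq: "s*q = s + 1" using s1 qdef by (simp add: field_simps)
    have f1: "s*r - (1+s) \<le> 0" using rq s1 sq mult_left_mono[OF rq, of s] by simp
    have q2: "q \<le> 2" using s1 qdef by simp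
    have f2: "r - (1+s) \<le> 0" using rq q2 s1 by simp
    have "0 \<le> (s*r - (1+s)) * (r - (1+s))" using f1 f2 by (simp add: mult_nonpos_nonpos)
    hence A: "(r-1)*(1+s)^2 \<le> s*r^2" by (simp add: algebra_simps power2_eq_square)
    have "th*r^2 = c/2 * (s*r^2/(1+s)^2)" using s1 by (simp add: th_def field_simps)
    moreover have "r - 1 \<le> s*r^2/(1+s)^2" using A s1 by (simp add: field_simps)
    moreover have "c/2 * (r-1) \<le> c/2 * (s*r^2/(1+s)^2)"
      using \<open>r - 1 \<le> s*r^2/(1+s)^2\<close> c by (intro mult_left_mono) auto
    ultimately show ?thesis by simp
  qed
  have claim: "a (Suc k) \<le> th^k * q * a k" for k
  proof (induction k)
    case 0 then show ?case using a1 by simp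
  next
    case (Suc k)
    define r where "r = a (Suc k) / a k"
    have r0: "0 < r" using pos by (simp add: r_def)
    have ar: "a (Suc k) = r * a k" using pos[of k] by (simp add: r_def)
    have "r \<le> th^k * q" using Suc pos[of k] by (simp add: r_def field_simps)
    moreover have "th^k \<le> 1" using th0 th1 by (simp add: power_le_one)
    ultimately have rq1: "r \<le> th^k * q" and rq: "r \<le> q" using q1
      by (auto intro: order_trans mult_right_mono[of "th^k" 1 q])
    have "a (Suc (Suc k)) \<le> c/2 * (r - 1) * a k" using rec[of k] ar by (simp add: algebra_simps)
    also have "\<dots> \<le> th*r^2 * a k" using key[OF r0 rq] pos[of k] by (simp add: mult_right_mono)
    also have "\<dots> = th * r * a (Suc k)" using ar by (simp add: power2_eq_square)
    also have "\<dots> \<le> th * (th^k*q) * a (Suc k)" using rq1 th0 pos[of "Suc k"]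
      by (simp add: mult_right_mono mult_left_mono)
    finally show ?case by (simp add: algebra_simps)
  qed
  obtain k where k: "th^k < 1/q" using real_arch_pow_inv[OF _ th1, of "1/q"] q1 by auto
  hence "th^k * q < 1" using q1 by (simp add: field_simps)
  hence "th^k * q * a k < a k" using pos[of k] by simp
  with claim[of k] inc[of k] show False by simp
qed


definition Tc :: "real \<Rightarrow> (nat\<Rightarrow>real) \<Rightarrow> nat \<Rightarrow> real" where
 "Tc t y n = (\<Sum>i=1..<Suc n. 2*y i + t)"

definition is_rec :: "real \<Rightarrow> (nat\<Rightarrow>real) \<Rightarrow> (nat\<Rightarrow>bool) \<Rightarrow> nat \<Rightarrow> bool" where
 "is_rec lam y r i \<longleftrightarrow> 1 \<le> i \<and> lam < y i \<and> (\<forall>i'. 1 \<le> i' \<and> i' < i \<and> r i' = r i \<longrightarrow> y i' < y i)"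

primrec gseq :: "real \<Rightarrow> (nat\<Rightarrow>real) \<Rightarrow> (nat\<Rightarrow>bool) \<Rightarrow> nat \<Rightarrow> nat" where
 "gseq lam y r 0 = (LEAST i. is_rec lam y r i)" |
 "gseq lam y r (Suc k) = (LEAST i. gseq lam y r k < i \<and> is_rec lam y r i \<and> r i \<noteq> r (gseq lam y r k))"

lemma Tc_0[simp]: "Tc t y 0 = 0" by (simp add: Tc_def)
lemma Tc_Suc: "Tc t y (Suc n) = Tc t y n + (2*y (Suc n) + t)"
  unfolding Tc_def by (simp add: sum.atLeastLessThan_Suc)

lemma Tc_strict:
  assumes "\<And>i. 1 \<le> i \<Longrightarrow> y i > 0" "t \<ge> 0"
  shows "strict_mono (Tc t y)"
unfolding strict_mono_Suc_iff
proof
  fix n show "Tc t y n < Tc t y (Suc n)" using assms(1)[of "Suc n"] assms(2) by (simp add: Tc_Suc)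
qed

lemma valid_unb:
  assumes "valid_strategy y r" shows "\<exists>i. 1 \<le> i \<and> r i = rho \<and> M < y i"
  using assms unfolding valid_strategy_def by (cases rho) blast+

lemma lim_le:
  fixes T c B :: real
  assumes "\<And>D. D > B \<Longrightarrow> T \<le> c*D"
  shows "T \<le> c*B"
proof (cases "c \<le> 0")
  case True
  have "T \<le> c*(B+1)" using assms by simp
  also have "\<dots> \<le> c*B" using True by (simp add: algebra_simps)
  finally show ?thesis .
next
  case False
  show ?thesis
  proof (rule ccontr)
    assume "\<not> ?thesis"
    hence h: "T > c*B" by simp
    define D where "D = B + (T - c*B)/(2*c)"
    have "D > B" using False h by (simp add: D_def)
    moreover have "c*D < T" using False h by (simp add: D_def field_simps)
    ultimately show False using assms by force
  qed
qed

lemma constraint: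
  assumes valid: "valid_strategy y r" and lam: "lam > 0" and t: "t \<ge> 0"
  and bound: "\<And>rho D. lam \<le> D \<Longrightarrow> search_cost t y r rho D / D \<le> R"
  and B: "lam \<le> B" and all: "\<And>i. 1 \<le> i \<Longrightarrow> i \<le> n \<Longrightarrow> r i = rho \<Longrightarrow> y i \<le> B"
  shows "Tc t y n \<le> (R-1)*B"
proof (rule lim_le)
  fix D assume DB: "D > B"
  have ypos: "\<And>i. 1 \<le> i \<Longrightarrow> y i > 0" using valid by (simp add: valid_strategy_def)
  obtain i where i: "1 \<le> i" "r i = rho" "D < y i"
    using valid_unb[OF valid, of rho] by blast
  define j where "j = find_step y r rho D"
  have j: "1 \<le> j \<and> r j = rho \<and> D \<le> y j"
    unfolding j_def find_step_def by (rule LeastI[of _ i]) (use i in auto)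
  have jn: "n < j"
  proof (rule ccontr)
    assume "\<not> n < j" hence "j \<le> n" by simp
    with all j have "y j \<le> B" by auto
    with j DB show False by simp
  qed
  have "Tc t y n = (\<Sum>i=1..<Suc n. 2*y i + t)" by (simp add: Tc_def)
  also have "\<dots> \<le> (\<Sum>i=1..<j. 2*y i + t)"
  proof (rule sum_mono2)
    show "finite {1..<j}" by simp
    show "{1..<Suc n} \<subseteq> {1..<j}" using jn by auto
    fix b assume "b \<in> {1..<j} - {1..<Suc n}"
    hence "1 \<le> b" by simp
    hence "y b > 0" by (rule ypos)
    thus "0 \<le> 2*y b + t" using t by simp
  qed
  finally have "Tc t y n + D \<le> search_cost t y r rho D"
    by (simp add: search_cost_def j_def)
  moreover have "search_cost t y r rho D \<le> R * D"
    using bound[of D rho] DB B lam by (simp add: divide_le_eq)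
  ultimately show "Tc t y n \<le> (R-1)*D" by (simp add: algebra_simps)
qed

lemma rec_exists:
  assumes valid: "valid_strategy y r"
  shows "\<exists>i > N. is_rec lam y r i \<and> r i = rho"
proof -
  define S where "S = {i. 1 \<le> i \<and> i \<le> N \<and> r i = rho}"
  have fS: "finite S" unfolding S_def by (rule finite_subset[of _ "{..N}"]) auto
  define B where "B = Max (insert lam (y ` S))"
  have Bl: "lam \<le> B" "\<And>i. i \<in> S \<Longrightarrow> y i \<le> B" using fS by (auto simp: B_def)
  obtain i0 where i0: "1 \<le> i0" "r i0 = rho" "B < y i0"
    using valid_unb[OF valid, of rho] by blast
  define i where "i = (LEAST i. 1 \<le> i \<and> r i = rho \<and> B < y i)"
  have i: "1 \<le> i \<and> r i = rho \<and> B < y i"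
    unfolding i_def by (rule LeastI[of _ i0]) (use i0 in auto)
  have iN: "N < i"
  proof (rule ccontr)
    assume "\<not> N < i" hence "i \<in> S" using i by (auto simp: S_def)
    with Bl i show False by force
  qed
  have "is_rec lam y r i" unfolding is_rec_def
  proof (intro conjI allI impI)
    show "1 \<le> i" "lam < y i" using i Bl by auto
    fix i' assume h: "1 \<le> i' \<and> i' < i \<and> r i' = r i"
    show "y i' < y i"
    proof (cases "i' \<le> N")
      case True hence "i' \<in> S" using h i by (auto simp: S_def)
      with Bl i show ?thesis by force
    next
      case False
      have "\<not> (1 \<le> i' \<and> r i' = rho \<and> B < y i')"
        using h unfolding i_def by (intro not_less_Least) (auto simp: i_def)
      with h i show ?thesis by auto
    qed
  qed
  with iN i show ?thesis by blast
qed

lemma argmax_rec: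
  assumes "1 \<le> i0" "i0 \<le> n" "r i0 = rho" "lam < y i0"
  shows "\<exists>j. 1 \<le> j \<and> j \<le> n \<and> r j = rho \<and> is_rec lam y r j \<and>
             (\<forall>i. 1\<le>i \<longrightarrow> i\<le>n \<longrightarrow> r i = rho \<longrightarrow> y i \<le> y j)"
proof -
  define S where "S = {i. 1 \<le> i \<and> i \<le> n \<and> r i = rho}"
  have fS: "finite S" unfolding S_def by (rule finite_subset[of _ "{..n}"]) auto
  have i0S: "i0 \<in> S" using assms by (simp add: S_def)
  define mx where "mx = Max (y ` S)"
  have mxin: "mx \<in> y ` S" unfolding mx_def using fS i0S by (intro Max_in) auto
  have mxge: "\<And>i. i \<in> S \<Longrightarrow> y i \<le> mx" unfolding mx_def using fS by auto
  obtain k where k: "k \<in> S" "y k = mx" using mxin by auto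
  define j where "j = (LEAST j. j \<in> S \<and> y j = mx)"
  have j: "j \<in> S \<and> y j = mx" unfolding j_def by (rule LeastI[of _ k]) (use k in auto)
  have "is_rec lam y r j" unfolding is_rec_def
  proof (intro conjI allI impI)
    show "1 \<le> j" using j by (simp add: S_def)
    show "lam < y j" using j mxge[OF i0S] assms by simp
    fix i' assume h: "1 \<le> i' \<and> i' < j \<and> r i' = r j"
    hence iS: "i' \<in> S" using j by (auto simp: S_def)
    have "\<not> (i' \<in> S \<and> y i' = mx)" using h unfolding j_def by (intro not_less_Least) (auto simp: j_def)
    with iS mxge[OF iS] j show "y i' < y j" by auto
  qed
  with j mxge show ?thesis by (auto simp: S_def)
qed


context
  fixes lam :: real and y :: "nat \<Rightarrow> real" and r :: "nat \<Rightarrow> bool"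
  assumes valid: "valid_strategy y r"
begin

lemma g0_rec: "is_rec lam y r (gseq lam y r 0)"
proof -
  obtain i where i: "is_rec lam y r i" using rec_exists[OF valid, of 0 lam True] by blast
  show ?thesis unfolding gseq.simps(1) by (rule LeastI[of _ i], fact)
qed

lemma g_next:
  "gseq lam y r k < gseq lam y r (Suc k) \<and> is_rec lam y r (gseq lam y r (Suc k))
   \<and> r (gseq lam y r (Suc k)) \<noteq> r (gseq lam y r k)"
proof -
  obtain i' where i': "gseq lam y r k < i' \<and> is_rec lam y r i' \<and> r i' = (\<not> r (gseq lam y r k))"
    using rec_exists[OF valid] by blast
  hence i'': "gseq lam y r k < i' \<and> is_rec lam y r i' \<and> r i' \<noteq> r (gseq lam y r k)" by simp
  show ?thesis unfolding gseq.simps(2) by (rule LeastI[of _ i'], fact i'')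
qed

lemma g_rec: "is_rec lam y r (gseq lam y r k)"
  by (cases k) (simp_all only: g0_rec g_next)

lemma g_block:
  assumes "gseq lam y r k \<le> i" "i < gseq lam y r (Suc k)" "is_rec lam y r i"
  shows "r i = r (gseq lam y r k)"
proof (cases "i = gseq lam y r k")
  case False
  hence gi: "gseq lam y r k < i" using assms by simp
  have "\<not> (gseq lam y r k < i \<and> is_rec lam y r i \<and> r i \<noteq> r (gseq lam y r k))"
    by (rule not_less_Least) (use assms(2) in \<open>simp only: gseq.simps(2)\<close>)
  with gi assms(3) show ?thesis by blast
qed simp

lemma g0_min: "is_rec lam y r i \<Longrightarrow> gseq lam y r 0 \<le> i"
  unfolding gseq.simps(1) by (rule Least_le)

lemma g_mono: "m < n \<Longrightarrow> gseq lam y r m < gseq lam y r n"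
  by (rule lift_Suc_mono_less[of "gseq lam y r"]) (use g_next in blast)

lemma g_ge1: "1 \<le> gseq lam y r k"
  using g_rec[of k] unfolding is_rec_def by blast

end

declare gseq.simps[simp del]

lemma lower_bound:
  fixes lam t s R :: real and y :: "nat \<Rightarrow> real" and r :: "nat \<Rightarrow> bool"
  assumes valid: "valid_strategy y r" and lam: "lam > 0" 
    and sdef: "s = t / (2 * lam)" and s1: "s \<ge> 1"
    and bound: "\<And>rho D. lam \<le> D \<Longrightarrow> search_cost t y r rho D / D \<le> R"
  shows "R \<ge> 1 + 2*(1+s)^2/s"
proof -
  have "t = 2*lam*s" using sdef lam by (simp add: field_simps)
  hence t: "t > 0" using s1 lam by simp
  have ypos: "\<And>i. 1 \<le> i \<Longrightarrow> y i > 0" using valid by (simp add: valid_strategy_def)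
  define c where "c = R - 1"
  define g where "g = gseq lam y r"
  define n where "n k = g k - 1" for k
  define T where "T = Tc t y"
  define a where "a k = T (n k)/2 + c*t/4" for k
  have smT: "strict_mono T" unfolding T_def using ypos t by (intro Tc_strict) auto
  have monoT: "m \<le> m' \<Longrightarrow> T m \<le> T m'" for m m' using smT strict_mono_less_eq by blast
  have T0: "T m \<ge> 0" for m using monoT[of 0 m] by (simp add: T_def)
  have g1: "1 \<le> g k" for k unfolding g_def by (rule g_ge1[OF valid])
  have gm: "k < k' \<Longrightarrow> g k < g k'" for k k' unfolding g_def by (rule g_mono[OF valid])
  have gp: "is_rec lam y r (g k) \<and> r (g (Suc k)) \<noteq> r (g k)" for k
    unfolding g_def using g_rec[OF valid, of lam k] g_next[OF valid, of lam k] by blast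
  have cons: "T m \<le> c*B" if "lam \<le> B" "\<And>i. 1 \<le> i \<Longrightarrow> i \<le> m \<Longrightarrow> r i = rho \<Longrightarrow> y i \<le> B" for m B rho
    unfolding T_def c_def using constraint[OF valid lam _ bound that] t by simp
  have c1: "T (n 1) \<le> c*lam"
  proof (rule cons[where rho = "r (g 1)"])
    show "lam \<le> lam" by simp
    fix i assume i: "1 \<le> i" "i \<le> n 1" "r i = r (g 1)"
    show "y i \<le> lam"
    proof (rule ccontr)
      assume "\<not> y i \<le> lam"
      then obtain j where j: "1 \<le> j" "j \<le> n 1" "r j = r (g 1)" "is_rec lam y r j"
        using argmax_rec[of i "n 1" r "r (g 1)" lam y] i by auto
      have "g 0 \<le> j" using g0_min[OF valid j(4)] by (simp add: g_def)
      moreover have "j < g (Suc 0)" using j(2) g1[of 1] by (simp add: n_def)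
      ultimately have "r j = r (g 0)" using g_block[OF valid _ _ j(4), of 0] by (simp add: g_def)
      with j(3) gp[of 0] show False by simp
    qed
  qed
  have n1: "n 1 \<ge> 1" using gm[of 0 1] g1[of 0] by (simp add: n_def)
  have "T (n 1) > 0" using smT n1 T0[of 0] strict_monoD[OF smT, of 0 "n 1"] by (simp add: T_def)
  hence c0: "c > 0" using c1 lam by (smt (verit) mult_nonpos_nonneg)
  have crec: "a (Suc (Suc k)) \<le> c/2 * (a (Suc k) - a k)" for k
  proof -
    have gk: "g k \<le> n (Suc (Suc k))" using gm[of k "Suc (Suc k)"] by (simp add: n_def)
    have yk: "lam < y (g k)" using gp[of k] by (simp add: is_rec_def)
    obtain j where j: "1 \<le> j" "j \<le> n (Suc (Suc k))" "r j = r (g k)" "is_rec lam y r j"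
      "\<And>i. 1\<le>i \<Longrightarrow> i\<le>n (Suc (Suc k)) \<Longrightarrow> r i = r (g k) \<Longrightarrow> y i \<le> y j"
      using argmax_rec[of "g k" "n (Suc (Suc k))" r "r (g k)" lam y] g1[of k] gk yk by blast
    have jlo: "g k \<le> j"
    proof (rule ccontr)
      assume "\<not> g k \<le> j"
      hence "y j < y (g k)" using gp[of k] j(1,3) by (auto simp: is_rec_def)
      moreover have "y (g k) \<le> y j" using j(5)[of "g k"] g1[of k] gk by simp
      ultimately show False by simp
    qed
    have jhi: "j < g (Suc k)"
    proof (rule ccontr)
      assume "\<not> j < g (Suc k)"
      moreover have "j < g (Suc (Suc k))" using j(2) g1[of "Suc (Suc k)"] by (simp add: n_def)
      ultimately have "r j = r (g (Suc k))" using g_block[OF valid _ _ j(4), of "Suc k"] by (simp add: g_def)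
      with j(3) gp[of k] show False by simp
    qed
    have yl: "lam \<le> y j" using j(4) by (simp add: is_rec_def)
    have A: "T (n (Suc (Suc k))) \<le> c * y j" using cons[OF yl j(5)] by blast
    have Tj: "T j = T (j - 1) + (2*y j + t)" using j(1) Tc_Suc[of t y "j-1"] by (simp add: T_def)
    have "T j \<le> T (n (Suc k))" using jhi by (intro monoT) (simp add: n_def)
    moreover have "T (n k) \<le> T (j - 1)" using jlo by (intro monoT) (simp add: n_def)
    ultimately have "2 * y j + t \<le> T (n (Suc k)) - T (n k)" using Tj by simp
    hence "c * (2 * y j + t) \<le> c * (T (n (Suc k)) - T (n k))" using c0 by (simp add: mult_left_mono)
    with A show ?thesis by (simp add: a_def algebra_simps)
  qed
  have inc: "a k < a (Suc k)" for k
  proof -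
    have "n k < n (Suc k)" using gm[of k "Suc k"] g1[of k] by (simp add: n_def)
    hence "T (n k) < T (n (Suc k))" using smT by (simp add: strict_mono_less)
    thus ?thesis by (simp add: a_def)
  qed
  have a0: "a 0 \<ge> c*t/4" using T0 by (simp add: a_def)
  hence a0p: "a 0 > 0" using c0 t by (smt (verit) mult_pos_pos divide_pos_pos)
  define q where "q = 1 + 1/s"
  have "a 1 \<le> c*lam/2 + c*t/4" using c1 by (simp add: a_def)
  also have "\<dots> = q * (c*t/4)" using sdef lam s1 by (simp add: q_def field_simps)
  also have "\<dots> \<le> q * a 0" using a0 s1 by (intro mult_left_mono) (auto simp: q_def)
  finally have a1: "a 1 \<le> q * a 0" .
  have "c \<ge> 2*(1+s)^2/s" by (rule core_lb[OF s1 q_def c0 inc a0p a1 crec])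
  thus ?thesis by (simp add: c_def)
qed



context
  fixes lam t s :: real and x :: "nat \<Rightarrow> real" and r :: "nat \<Rightarrow> bool"
  assumes lam: "lam > 0" and t: "t \<ge> 0"
    and sdef: "s = t / (2 * lam)" and s1: "s \<ge> 1"
    and xdef: "\<And>i. x i = ((1 + s) * (1 + 1 / s) ^ i - s) * lam"
    and per: "periodic_rays r"
begin

abbreviation "q \<equiv> 1 + 1/s"

lemma tdef: "t = 2*s*lam" using sdef lam by (simp add: field_simps)

lemma q1: "q > 1" using s1 by simp

lemma x_ge: "x i \<ge> (1 + real i) * lam"
proof -
  have sp: "s > 0" using s1 by simp
  have "1 + real i * (1/s) \<le> q ^ i" proof (rule Bernoulli_inequality)
    have "1/s > 0" using sp by simp
    thus "-1 \<le> 1/s" by linarith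
  qed
  hence "(1+s) * (1 + real i * (1/s)) \<le> (1+s) * q^i" using sp by (intro mult_left_mono) auto
  moreover have "(1+s) * (1 + real i * (1/s)) - s = 1 + real i + real i / s" using sp by (simp add: field_simps)
  moreover have "real i / s \<ge> 0" using sp by simp
  ultimately have h: "(1 + real i) \<le> (1+s)*q^i - s" by linarith
  have "(1 + real i) * lam \<le> ((1+s)*q^i - s) * lam" using h lam by (intro mult_right_mono) auto
  thus ?thesis by (simp only: xdef)
qed

lemma x_pos: "x i > 0"
proof -
  have "(1 + real i)*lam > 0" using lam by simp
  with x_ge[of i] show ?thesis by linarith
qed

lemma x_inc: "x i < x (Suc i)"
proof -
  have "q^i < q^Suc i" by (rule power_strict_increasing) (use q1 in auto)
  hence "(1+s)*q^i < (1+s)*q^Suc i" using s1 by (intro mult_strict_left_mono) auto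
  hence "((1+s)*q^i - s)*lam < ((1+s)*q^Suc i - s)*lam" using lam by (intro mult_strict_right_mono) auto
  thus ?thesis by (simp only: xdef)
qed

lemma rays: "1 \<le> i \<Longrightarrow> r i = (if odd i then r 1 else r 2)"
proof (induction i rule: less_induct)
  case (less i)
  show ?case
  proof (cases "i \<le> 2")
    case True with less.prems have "i = 1 \<or> i = 2" by auto
    thus ?thesis by auto
  next
    case False
    define m where "m = i - 2"
    have m: "i = m + 2" "1 \<le> m" using False by (auto simp: m_def)
    have "r i = r m" using per m unfolding periodic_rays_def by simp
    also have "\<dots> = (if odd m then r 1 else r 2)" using less.IH[of m] m by simp
    finally show ?thesis using m by simp
  qed
qed

lemma r12: "r 1 \<noteq> r 2" using per by (simp add: periodic_rays_def)

lemma sum_x: "(\<Sum>i=1..<Suc m. 2*x i + t) = 2*lam*(1+s)^2*(q^m - 1)"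
proof (induction m)
  case 0 then show ?case by simp
next
  case (Suc m)
  have "(\<Sum>i=1..<Suc (Suc m). 2*x i + t) = (\<Sum>i=1..<Suc m. 2*x i + t) + (2*x (Suc m) + t)"
    by (simp add: sum.atLeastLessThan_Suc)
  also have "\<dots> = 2*lam*(1+s)^2*(q^m - 1) + (2*x (Suc m) + t)" using Suc by simp
  also have "\<dots> = 2*lam*(1+s)^2*(q^Suc m - 1)"
    unfolding xdef tdef using s1 by (simp add: field_simps power2_eq_square)
  finally show ?case .
qed

abbreviation "Rs \<equiv> (2 * x 1 + t + lam) / lam"

lemma Rs_eq: "Rs = 1 + 2*(1+s)^2/s"
proof -
  have "x 1 = ((1+s)*q - s)*lam" by (simp only: xdef power_one_right)
  also have "\<dots> = (2 + 1/s)*lam" using s1 by (simp add: field_simps)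
  finally have x1: "x 1 = (2 + 1/s)*lam" .
  show ?thesis unfolding x1 tdef using s1 lam by (simp add: field_simps power2_eq_square)
qed

lemma find_ok: "lam \<le> D \<Longrightarrow> \<exists>i. 1 \<le> i \<and> r i = rho \<and> D \<le> x i"
proof -
  assume D: "lam \<le> D"
  obtain N :: nat where N: "D / lam < real N" using reals_Archimedean2 by blast
  hence DN: "D < real N * lam" using lam by (simp add: field_simps)
  have big: "D \<le> x i" if "N \<le> i" for i
  proof -
    have "real N * lam \<le> (1 + real i) * lam" using that lam by (intro mult_right_mono) auto
    thus ?thesis using x_ge[of i] DN by linarith
  qed
  have "rho = r 1 \<or> rho = r 2" using r12 by auto
  thus ?thesis
  proof
    assume "rho = r 1"
    moreover have "r (2*N+1) = r 1" using rays[of "2*N+1"] by simp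
    ultimately show ?thesis using big[of "2*N+1"] by (intro exI[of _ "2*N+1"]) auto
  next
    assume "rho = r 2"
    moreover have "r (2*N+2) = r 2" using rays[of "2*N+2"] by simp
    ultimately show ?thesis using big[of "2*N+2"] by (intro exI[of _ "2*N+2"]) auto
  qed
qed

lemma target_bound:
  assumes D: "lam \<le> D"
  shows "search_cost t x r rho D / D \<le> Rs"
proof -
  have Dp: "D > 0" using D lam by simp
  obtain i where i: "1 \<le> i \<and> r i = rho \<and> D \<le> x i" using find_ok[OF D] by blast
  define j where "j = find_step x r rho D"
  have j: "1 \<le> j \<and> r j = rho \<and> D \<le> x j"
    unfolding j_def find_step_def by (rule LeastI[of _ i]) (use i in auto)
  have jmin: "\<And>k. k < j \<Longrightarrow> \<not> (1 \<le> k \<and> r k = rho \<and> D \<le> x k)"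
    unfolding j_def find_step_def by (rule not_less_Least)
  have cost: "search_cost t x r rho D = (\<Sum>i=1..<j. 2*x i + t) + D"
    by (simp add: search_cost_def j_def)
  have Rs1: "Rs \<ge> 1" using Rs_eq s1 by simp
  consider "j = 1" | "j = 2" | "j \<ge> 3" using j by linarith
  thus ?thesis
  proof cases
    case 1 thus ?thesis using cost Dp Rs1 by simp
  next
    case 2
    hence "search_cost t x r rho D = (2*x 1 + t) + D" using cost by (simp add: numeral_2_eq_2)
    moreover have "(2*x 1 + t)/D \<le> (2*x 1 + t)/lam"
      using D lam x_pos[of 1] t by (intro divide_left_mono) auto
    ultimately show ?thesis using Dp lam by (simp add: add_divide_distrib)
  next
    case 3
    define m where "m = j - 2"
    have m1: "1 \<le> m" and jm: "j = Suc (Suc m)" using 3 by (auto simp: m_def)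
    have "r m = r j" using per m1 jm unfolding periodic_rays_def by (simp add: numeral_2_eq_2)
    hence xm: "x m < D" using jmin[of m] j m1 jm by auto
    have "(\<Sum>i=1..<j. 2*x i + t) = 2*lam*(1+s)^2*(q^Suc m - 1)"
      using sum_x[of "Suc m"] jm by simp
    also have "\<dots> = (2*(1+s)^2/s) * x m"
      unfolding xdef using s1 by (simp add: field_simps power2_eq_square)
    finally have S: "(\<Sum>i=1..<j. 2*x i + t) = (2*(1+s)^2/s) * x m" .
    have "(2*(1+s)^2/s) * x m \<le> (2*(1+s)^2/s) * D"
      using xm s1 by (intro mult_left_mono) auto
    hence "search_cost t x r rho D \<le> Rs * D" using cost S Rs_eq by (simp add: algebra_simps)
    thus ?thesis using Dp by (simp add: divide_le_eq)
  qed
qed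

lemma target_attain: "search_cost t x r (r 2) lam / lam = Rs"
proof -
  have "find_step x r (r 2) lam = 2"
    unfolding find_step_def
  proof (rule Least_equality)
    show "2 \<ge> (1::nat) \<and> r 2 = r 2 \<and> lam \<le> x 2" using x_ge[of 2] lam by simp
    fix k assume k: "1 \<le> k \<and> r k = r 2 \<and> lam \<le> x k"
    show "2 \<le> k"
    proof (rule ccontr)
      assume "\<not> 2 \<le> k" with k have "k = 1" by simp
      with k r12 show False by simp
    qed
  qed
  thus ?thesis unfolding search_cost_def by (simp add: numeral_2_eq_2)
qed

lemma x_big: "\<exists>N. \<forall>i\<ge>N. M < x i"
proof -
  obtain N :: nat where N: "max M lam / lam < real N" using reals_Archimedean2 by blast
  have MN: "max M lam < real N * lam" using N lam by (simp add: field_simps)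
  have "M < x i" if "N \<le> i" for i
  proof -
    have "real N * lam \<le> (1 + real i) * lam" using that lam by (intro mult_right_mono) auto
    thus ?thesis using x_ge[of i] MN by linarith
  qed
  thus ?thesis by blast
qed

lemma x_big_ray: "\<exists>i\<ge>1. r i = rho \<and> M < x i"
proof -
  obtain N where big: "\<And>i. N \<le> i \<Longrightarrow> M < x i" using x_big[of M] by blast
  have o: "r (2*N+1) = r 1" using rays[of "2*N+1"] by simp
  have e: "r (2*N+2) = r 2" using rays[of "2*N+2"] by simp
  have "rho = r 1 \<or> rho = r 2" using r12 by auto
  thus ?thesis
  proof
    assume "rho = r 1" thus ?thesis using o big[of "2*N+1"] by (intro exI[of _ "2*N+1"]) auto
  next
    assume "rho = r 2" thus ?thesis using e big[of "2*N+2"] by (intro exI[of _ "2*N+2"]) auto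
  qed
qed

lemma valid_x: "valid_strategy x r"
  unfolding valid_strategy_def using x_pos x_big_ray by blast

end

theorem theorem4:
  fixes lam t s :: real and x :: "nat \<Rightarrow> real" and r :: "nat \<Rightarrow> bool"
  assumes "lam > 0" and "t \<ge> 0"
    and "s = t / (2 * lam)" and "s \<ge> 1"
    and "\<And>i. x i = ((1 + s) * (1 + 1 / s) ^ i - s) * lam"
    and "periodic_rays r"
  shows "optimal_strategy lam t x r
    \<and> comp_ratio lam t x r = ereal ((2 * x 1 + t + lam) / lam)
    \<and> (2 * x 1 + t + lam) / lam = 2 * (s + 2) * (s + 1 / 2) / s"
proof -
  define Rs where "Rs = (2 * x 1 + t + lam) / lam"
  have tb: "search_cost t x r rho D / D \<le> Rs" if "lam \<le> D" for rho D
    using target_bound[OF assms that] by (simp add: Rs_def)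
  have ta: "search_cost t x r (r 2) lam / lam = Rs"
    using target_attain[OF assms] by (simp add: Rs_def)
  have Req: "Rs = 1 + 2*(1+s)^2/s" using Rs_eq[OF assms] by (simp add: Rs_def)
  have val: "valid_strategy x r" by (rule valid_x[OF assms])
  have CR: "comp_ratio lam t x r = ereal Rs"
  proof (rule antisym)
    show "comp_ratio lam t x r \<le> ereal Rs" unfolding comp_ratio_def
      by (rule SUP_least) (auto simp: tb)
    have "ereal (search_cost t x r (fst (r 2, lam)) (snd (r 2, lam)) / snd (r 2, lam))
          \<le> comp_ratio lam t x r"
      unfolding comp_ratio_def by (rule SUP_upper) simp
    thus "ereal Rs \<le> comp_ratio lam t x r" using ta by simp
  qed
  have opt: "comp_ratio lam t x r \<le> comp_ratio lam t x' r'" if v: "valid_strategy x' r'" for x' r'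
  proof (rule ccontr)
    define C where "C = comp_ratio lam t x' r'"
    assume "\<not> comp_ratio lam t x r \<le> comp_ratio lam t x' r'"
    hence lt: "C < ereal Rs" using CR by (simp add: C_def)
    have ge: "ereal (search_cost t x' r' rho D / D) \<le> C" if "lam \<le> D" for rho D
    proof -
      have "ereal (search_cost t x' r' (fst (rho, D)) (snd (rho, D)) / snd (rho, D)) \<le> C"
        unfolding C_def comp_ratio_def by (rule SUP_upper) (use that in simp)
      thus ?thesis by simp
    qed
    have nm: "C \<noteq> -\<infinity>" using ge[of lam True] by auto
    have np: "C \<noteq> \<infinity>" using lt by auto
    obtain R where R: "C = ereal R" using nm np by (cases C) auto
    have bound: "search_cost t x' r' rho D / D \<le> R" if "lam \<le> D" for rho D
      using ge[OF that, of rho] R by simp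
    have "R \<ge> 1 + 2*(1+s)^2/s" by (rule lower_bound[OF v assms(1,3,4) bound])
    moreover have "R < Rs" using lt R by simp
    ultimately show False using Req by simp
  qed
  have eq3: "Rs = 2 * (s + 2) * (s + 1 / 2) / s"
    using Req assms(4) by (simp add: field_simps power2_eq_square)
  show ?thesis
    unfolding optimal_strategy_def using val opt CR eq3 by (simp add: Rs_def)
qed

end
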